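(* In the setting of the context, let $W(\lambda)=U(x,\lambda)V'(x,\lambda)-U'(x,\lambda)V(x,\lambda)$ (independent of $x\in(0,1)$) for $\lambda\in\mathbb C\setminus\sigma_1$, and let $\sigma_2=\{\lambda\in\mathbb C\setminus\sigma_1: W(\lambda)=0\}$. Then $\sigma_2$ is a discrete subset of $\mathbb R\setminus\sigma_1$. If $\delta_R\delta_B>1$ and $s(\lambda)=\sin(\sqrt\lambda)/\sqrt\lambda=0$, then $\lambda\in\sigma_2$. If $\lambda\in\sigma_2$ and $U(\cdot,\lambda)$ and $V(\cdot,\lambda)$ are not identically zero (which is the case if $s(\lambda)=0$), then $\lambda$ is an eigenvalue of the operator $\mathcal L$ on the tree $\mathcal T$.
   Context: $\mathcal T$ is the infinite biregular tree (vertex classes $\mathcal V_R,\mathcal V_B$, degrees $\delta_R+1$ and $\delta_B+1$, integers $\delta_B,\delta_R\ge1$), each edge identified with $[0,1]$; $\mathcal L$ acts by $-d^2/dx^2$ on $L^2(\mathcal T)=\bigoplus_eL^2(e)$ with domain the functions continuous on $\mathcal T$, $C^1$ on edges with absolutely continuous derivative, second derivative in $L^2$, and $\sum_{e\sim v}\partial_\nu f_e(v)=0$ at every vertex (outward derivatives). With $\omega=\sqrt\lambda$: $c=\cos\omega$, $c'=-\omega\sin\omega$, $s=\sin\omega/\omega$, $s'=\cos\omega$; $M_0=\begin{pmatrix}c&s\\c'&s'\end{pmatrix}$, $J_B=\operatorname{diag}(1,1/\delta_B)$, $J_R=\operatorname{diag}(1,1/\delta_R)$, $T_0(\lambda)=J_RM_0J_BM_0$;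 $\sigma_1=\{\lambda: T_0(\lambda)$ has an eigenvalue of modulus $(\delta_B\delta_R)^{-1/2}\}$, and on $\mathbb C\setminus\sigma_1$, $\mu^-(\lambda)$ is the analytic eigenvalue of $T_0(\lambda)$ with $|\mu^-|<(\delta_B\delta_R)^{-1/2}$. On $[0,1]$: $V(x,\lambda)=sc(1+\tfrac1{\delta_B})\cos(\omega x)+[\mu^--c^2-\tfrac{sc'}{\delta_B}]\tfrac{\sin(\omega x)}{\omega}$, $U(x,\lambda)=-sc(1+\tfrac1{\delta_R})\cos(\omega(1-x))-[\mu^--c^2-\tfrac{sc'}{\delta_R}]\tfrac{\sin(\omega(1-x))}{\omega}$. Fixing an edge $e_0=\{r_0,b_0\}$ ($r_0\in\mathcal V_R$) identified with $[0,1]$, $r_0\leftrightarrow 0$, $V$ extends to the union $\mathcal T_0$ of nonbacktracking rays $r_0,b_0,r_1,\dots$ and $U$ to the union $\mathcal T_1$ of rays $b_0,r_0,b_{-1},\dots$ as square integrable solutions of $-y''=\lambda y$ satisfying the vertex conditions away from $e_0$. *)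

theory Defs
  imports "HOL-Analysis.Analysis"
begin

definition sinc_w :: "complex \<Rightarrow> complex \<Rightarrow> complex" where
  "sinc_w w z = (if w = 0 then z else sin (w * z) / w)"

definition omg :: "complex \<Rightarrow> complex" where "omg lam = csqrt lam"

definition cc :: "complex \<Rightarrow> complex" where "cc lam = cos (omg lam)"
definition cc' :: "complex \<Rightarrow> complex" where "cc' lam = - omg lam * sin (omg lam)"
definition ss :: "complex \<Rightarrow> complex" where "ss lam = sinc_w (omg lam) 1"
definition ss' :: "complex \<Rightarrow> complex" where "ss' lam = cos (omg lam)"

definition mat2 :: "complex \<Rightarrow> complex \<Rightarrow> complex \<Rightarrow> complex \<Rightarrow> complex^2^2" where
  "mat2 a b c d = vector [vector [a, b], vector [c, d]]"

definition M0 :: "complex \<Rightarrow> complex^2^2" where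
  "M0 lam = mat2 (cc lam) (ss lam) (cc' lam) (ss' lam)"

definition Jm :: "nat \<Rightarrow> complex^2^2" where
  "Jm \<delta> = mat2 1 0 0 (1 / of_nat \<delta>)"

definition T0 :: "nat \<Rightarrow> nat \<Rightarrow> complex \<Rightarrow> complex^2^2" where
  "T0 \<delta>R \<delta>B lam = Jm \<delta>R ** M0 lam ** Jm \<delta>B ** M0 lam"

definition is_eigenvalue2 :: "complex^2^2 \<Rightarrow> complex \<Rightarrow> bool" where
  "is_eigenvalue2 A \<mu> \<longleftrightarrow> (\<exists>v. v \<noteq> 0 \<and> A *v v = \<mu> *s v)"

definition rad :: "nat \<Rightarrow> nat \<Rightarrow> real" where
  "rad \<delta>R \<delta>B = 1 / sqrt (real (\<delta>B * \<delta>R))"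

definition sigma1 :: "nat \<Rightarrow> nat \<Rightarrow> complex set" where
  "sigma1 \<delta>R \<delta>B = {lam. \<exists>\<mu>. is_eigenvalue2 (T0 \<delta>R \<delta>B lam) \<mu> \<and> cmod \<mu> = rad \<delta>R \<delta>B}"

(* on C \ sigma1: the (unique) eigenvalue of T0 of modulus < (dB dR)^(-1/2) *)
definition mu_minus :: "nat \<Rightarrow> nat \<Rightarrow> complex \<Rightarrow> complex" where
  "mu_minus \<delta>R \<delta>B lam = (THE \<mu>. is_eigenvalue2 (T0 \<delta>R \<delta>B lam) \<mu> \<and> cmod \<mu> < rad \<delta>R \<delta>B)"

definition Vf :: "nat \<Rightarrow> nat \<Rightarrow> complex \<Rightarrow> real \<Rightarrow> complex" where
  "Vf \<delta>R \<delta>B lam x =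
     ss lam * cc lam * (1 + 1 / of_nat \<delta>B) * cos (omg lam * of_real x)
     + (mu_minus \<delta>R \<delta>B lam - (cc lam)\<^sup>2 - ss lam * cc' lam / of_nat \<delta>B) * sinc_w (omg lam) (of_real x)"

definition Uf :: "nat \<Rightarrow> nat \<Rightarrow> complex \<Rightarrow> real \<Rightarrow> complex" where
  "Uf \<delta>R \<delta>B lam x =
     - ss lam * cc lam * (1 + 1 / of_nat \<delta>R) * cos (omg lam * of_real (1 - x))
     - (mu_minus \<delta>R \<delta>B lam - (cc lam)\<^sup>2 - ss lam * cc' lam / of_nat \<delta>R) * sinc_w (omg lam) (of_real (1 - x))"

(* W = U V' - U' V, evaluated at the point x = 1/2 of (0,1) (it is independent of x) *)
definition Wr :: "nat \<Rightarrow> nat \<Rightarrow> complex \<Rightarrow> complex" where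
  "Wr \<delta>R \<delta>B lam =
     Uf \<delta>R \<delta>B lam (1/2) * vector_derivative (Vf \<delta>R \<delta>B lam) (at (1/2))
     - vector_derivative (Uf \<delta>R \<delta>B lam) (at (1/2)) * Vf \<delta>R \<delta>B lam (1/2)"

definition sigma2 :: "nat \<Rightarrow> nat \<Rightarrow> complex set" where
  "sigma2 \<delta>R \<delta>B = {lam. lam \<notin> sigma1 \<delta>R \<delta>B \<and> Wr \<delta>R \<delta>B lam = 0}"

(* vertices of type 'v; red v means v \<in> V_R, otherwise v \<in> V_B; adj is the edge relation *)
definition biregular_tree :: "nat \<Rightarrow> nat \<Rightarrow> ('v \<Rightarrow> bool) \<Rightarrow> ('v \<Rightarrow> 'v \<Rightarrow> bool) \<Rightarrow> bool" where
  "biregular_tree \<delta>R \<delta>B red adj \<longleftrightarrow>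
     (\<forall>u v. adj u v \<longrightarrow> adj v u) \<and>
     (\<forall>u v. adj u v \<longrightarrow> red u \<noteq> red v) \<and>
     (\<forall>v. red v \<longrightarrow> finite {u. adj v u} \<and> card {u. adj v u} = \<delta>R + 1) \<and>
     (\<forall>v. \<not> red v \<longrightarrow> finite {u. adj v u} \<and> card {u. adj v u} = \<delta>B + 1) \<and>
     (\<forall>u v. adj\<^sup>*\<^sup>* u v) \<and>
     (\<forall>u v. adj u v \<longrightarrow> \<not> (\<lambda>x y. adj x y \<and> {x, y} \<noteq> {u, v})\<^sup>*\<^sup>* u v)"

(* edges, oriented red-to-blue; edge (r,b) is identified with [0,1], r <-> 0, b <-> 1 *)
definition tree_edges :: "('v \<Rightarrow> bool) \<Rightarrow> ('v \<Rightarrow> 'v \<Rightarrow> bool) \<Rightarrow> ('v \<times> 'v) set" where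
  "tree_edges red adj = {(r, b). red r \<and> adj r b}"

definition in_L2_tree :: "('v \<Rightarrow> bool) \<Rightarrow> ('v \<Rightarrow> 'v \<Rightarrow> bool) \<Rightarrow> ('v \<Rightarrow> 'v \<Rightarrow> real \<Rightarrow> complex) \<Rightarrow> bool" where
  "in_L2_tree red adj f \<longleftrightarrow>
     (\<forall>(r, b) \<in> tree_edges red adj.
        f r b \<in> borel_measurable lborel \<and> (\<lambda>x. (cmod (f r b x))\<^sup>2) integrable_on {0..1}) \<and>
     ((\<lambda>(r, b). integral {0..1} (\<lambda>x. (cmod (f r b x))\<^sup>2)) summable_on tree_edges red adj)"

(* f in dom(L) with second derivative h (so that L f = - h):
   on each edge f is C^1 with absolutely continuous derivative f', f'(x) = f'(0) + \<integral>_0^x h,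
   h in L^2(T); f continuous at vertices; Kirchhoff condition at every vertex *)
definition in_dom_L ::
  "('v \<Rightarrow> bool) \<Rightarrow> ('v \<Rightarrow> 'v \<Rightarrow> bool) \<Rightarrow> ('v \<Rightarrow> 'v \<Rightarrow> real \<Rightarrow> complex) \<Rightarrow> ('v \<Rightarrow> 'v \<Rightarrow> real \<Rightarrow> complex) \<Rightarrow> bool" where
  "in_dom_L red adj f h \<longleftrightarrow>
     in_L2_tree red adj f \<and> in_L2_tree red adj h \<and>
     (\<forall>(r, b) \<in> tree_edges red adj. \<exists>f'.
        (\<forall>x\<in>{0..1}. (f r b has_vector_derivative f' x) (at x within {0..1})) \<and>
        (\<forall>x\<in>{0..1}. (h r b has_integral (f' x - f' 0)) {0..x})) \<and>
     (\<forall>r b b'. (r, b) \<in> tree_edges red adj \<and> (r, b') \<in> tree_edges red adj \<longrightarrow> f r b 0 = f r b' 0) \<and>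
     (\<forall>r r' b. (r, b) \<in> tree_edges red adj \<and> (r', b) \<in> tree_edges red adj \<longrightarrow> f r b 1 = f r' b 1) \<and>
     (\<forall>r. red r \<longrightarrow>
        (\<Sum>b\<in>{b. adj r b}. vector_derivative (f r b) (at 0 within {0..1})) = 0) \<and>
     (\<forall>b. \<not> red b \<longrightarrow>
        (\<Sum>r\<in>{r. adj b r}. - vector_derivative (f r b) (at 1 within {0..1})) = 0)"

definition is_eigenvalue_L :: "('v \<Rightarrow> bool) \<Rightarrow> ('v \<Rightarrow> 'v \<Rightarrow> bool) \<Rightarrow> complex \<Rightarrow> bool" where
  "is_eigenvalue_L red adj lam \<longleftrightarrow>
     (\<exists>f h. in_dom_L red adj f h \<and>
        (\<exists>(r, b) \<in> tree_edges red adj. integral {0..1} (\<lambda>x. (cmod (f r b x))\<^sup>2) \<noteq> 0) \<and>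
        (\<forall>(r, b) \<in> tree_edges red adj.
           AE x in lborel. x \<in> {0..1} \<longrightarrow> - h r b x = lam * f r b x))"

end

theory Submission
  imports Defs
begin


lemma ss'_cc: "ss' lam = cc lam" by (simp add: ss'_def cc_def)

lemma T0_entries:
  "T0 dR dB lam $1$1 = (cc lam)^2 + ss lam * cc' lam / of_nat dB"
  "T0 dR dB lam $1$2 = ss lam * cc lam * (1 + 1/of_nat dB)"
  "T0 dR dB lam $2$1 = cc lam * cc' lam * (1 + 1/of_nat dB) / of_nat dR"
  "T0 dR dB lam $2$2 = (ss lam * cc' lam + (cc lam)^2 / of_nat dB) / of_nat dR"
  unfolding T0_def Jm_def M0_def mat2_def ss'_cc
  by (simp_all add: matrix_matrix_mult_def sum_2 algebra_simps power2_eq_square add_divide_distrib)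

lemma cs_id: "(cc lam)^2 - ss lam * cc' lam = 1"
proof (cases "omg lam = 0")
  case True then show ?thesis by (simp add: cc_def ss_def cc'_def sinc_w_def)
next
  case False
  then show ?thesis using sin_cos_squared_add[of "omg lam"]
    by (simp add: cc_def ss_def cc'_def sinc_w_def field_simps power2_eq_square)
qed

lemma eig2_iff:
  fixes A :: "complex^2^2"
  shows "is_eigenvalue2 A m \<longleftrightarrow> (A$1$1 - m) * (A$2$2 - m) - A$1$2 * A$2$1 = 0"
proof
  assume "is_eigenvalue2 A m"
  then obtain v where v: "v \<noteq> 0" "A *v v = m *s v" unfolding is_eigenvalue2_def by blast
  have e1: "A$1$1 * v$1 + A$1$2 * v$2 = m * v$1"
    using arg_cong[OF v(2), of "\<lambda>w. w$1"] by (simp add: matrix_vector_mult_def sum_2)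
  have e2: "A$2$1 * v$1 + A$2$2 * v$2 = m * v$2"
    using arg_cong[OF v(2), of "\<lambda>w. w$2"] by (simp add: matrix_vector_mult_def sum_2)
  have nz: "v$1 \<noteq> 0 \<or> v$2 \<noteq> 0"
    using v(1) by (metis (mono_tags) exhaust_2 vec_eq_iff zero_index)
  let ?d = "(A$1$1 - m) * (A$2$2 - m) - A$1$2 * A$2$1"
  have "?d * v$1 = 0" using e1 e2 by algebra
  moreover have "?d * v$2 = 0" using e1 e2 by algebra
  ultimately show "?d = 0" using nz by auto
next
  assume d: "(A$1$1 - m) * (A$2$2 - m) - A$1$2 * A$2$1 = 0"
  show "is_eigenvalue2 A m"
  proof (cases "A$1$2 = 0 \<and> A$1$1 = m")
    case False
    define v :: "complex^2" where "v = vector [A$1$2, m - A$1$1]"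
    have "v \<noteq> 0" using False by (auto simp: v_def vec_eq_iff forall_2)
    moreover have "A *v v = m *s v"
      using d by (auto simp: v_def vec_eq_iff forall_2 matrix_vector_mult_def sum_2 algebra_simps)
        (metis (no_types, lifting) add.commute diff_add_cancel mult.commute right_diff_distrib)?
    ultimately show ?thesis unfolding is_eigenvalue2_def by blast
  next
    case True
    show ?thesis
    proof (cases "A$2$1 = 0 \<and> A$2$2 = m")
      case False
      define v :: "complex^2" where "v = vector [m - A$2$2, A$2$1]"
      have "v \<noteq> 0" using False by (auto simp: v_def vec_eq_iff forall_2)
      moreover have "A *v v = m *s v"
        using d True by (auto simp: v_def vec_eq_iff forall_2 matrix_vector_mult_def sum_2 algebra_simps)
      ultimately show ?thesis unfolding is_eigenvalue2_def by blast
    next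
      case True2: True
      define v :: "complex^2" where "v = vector [1, 0]"
      have "v \<noteq> 0" by (auto simp: v_def vec_eq_iff forall_2)
      moreover have "A *v v = m *s v"
        using True2 True by (auto simp: v_def vec_eq_iff forall_2 matrix_vector_mult_def sum_2)
      ultimately show ?thesis unfolding is_eigenvalue2_def by blast
    qed
  qed
qed


lemma sinc_deriv: "((sinc_w w) has_field_derivative cos (w*z)) (at z)"
proof (cases "w = 0")
  case True
  have "sinc_w w = (\<lambda>z. z)" using True by (auto simp: sinc_w_def fun_eq_iff)
  then show ?thesis using True by (auto intro!: derivative_eq_intros)
next
  case False
  have "sinc_w w = (\<lambda>z. sin (w*z) / w)" using False by (auto simp: sinc_w_def fun_eq_iff)
  then show ?thesis using False by (auto intro!: derivative_eq_intros)
qed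

lemma cos_deriv: "((\<lambda>z. cos (w*z)) has_field_derivative (- (w^2) * sinc_w w z)) (at z)"
proof -
  have "((\<lambda>z. cos (w*z)) has_field_derivative (- sin (w*z) * w)) (at z)"
    by (auto intro!: derivative_eq_intros)
  moreover have "- sin (w*z) * w = - (w^2) * sinc_w w z"
    by (cases "w = 0") (auto simp: sinc_w_def power2_eq_square)
  ultimately show ?thesis by simp
qed

lemma V_form: "Vf dR dB lam = (\<lambda>x. (\<lambda>z. (ss lam * cc lam * (1 + 1 / of_nat dB)) * cos (omg lam * z)
     + (mu_minus dR dB lam - (cc lam)\<^sup>2 - ss lam * cc' lam / of_nat dB) * sinc_w (omg lam) z) (of_real x))"
  by (simp add: Vf_def fun_eq_iff)

lemma U_form: "Uf dR dB lam = (\<lambda>x. (\<lambda>z. - (ss lam * cc lam * (1 + 1 / of_nat dR)) * cos (omg lam * (1 - z))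
     - (mu_minus dR dB lam - (cc lam)\<^sup>2 - ss lam * cc' lam / of_nat dR) * sinc_w (omg lam) (1 - z)) (of_real x))"
  by (simp add: Uf_def fun_eq_iff)

lemma gen_V_deriv:
  "((\<lambda>x. (\<lambda>z. K1 * cos (w * z) + K2 * sinc_w w z) (of_real x)) has_vector_derivative
     (K1 * (- (w^2) * sinc_w w (of_real a)) + K2 * cos (w * of_real a))) (at a)"
  by (rule has_vector_derivative_real_field)
     (intro DERIV_add DERIV_cmult cos_deriv sinc_deriv)

lemma gen_U_deriv:
  "((\<lambda>x. (\<lambda>z. - K3 * cos (w * (1 - z)) - K4 * sinc_w w (1 - z)) (of_real x)) has_vector_derivative
     (- K3 * (w^2) * sinc_w w (1 - of_real a) + K4 * cos (w * (1 - of_real a)))) (at a)"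
proof (rule has_vector_derivative_real_field)
  have h1: "((\<lambda>z. 1 - z) has_field_derivative (-1)) (at (of_real a :: complex))"
    by (auto intro!: derivative_eq_intros)
  have "((\<lambda>z. - K3 * cos (w * (1 - z)) - K4 * sinc_w w (1 - z)) has_field_derivative
      (- K3 * ((- (w^2) * sinc_w w (1 - of_real a)) * (-1)) - K4 * (cos (w * (1 - of_real a)) * (-1)))) (at (of_real a))"
    by (intro DERIV_diff DERIV_cmult DERIV_chain2[OF cos_deriv h1] DERIV_chain2[OF sinc_deriv h1])
  then show "((\<lambda>z. - K3 * cos (w * (1 - z)) - K4 * sinc_w w (1 - z)) has_field_derivative
      (- K3 * (w^2) * sinc_w w (1 - of_real a) + K4 * cos (w * (1 - of_real a)))) (at (of_real a))"
    by (simp add: algebra_simps)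
qed

lemma half_angle:
  "cc lam = (cos (omg lam / 2))^2 - (omg lam)^2 * (sinc_w (omg lam) (1/2))^2"
  "ss lam = 2 * sinc_w (omg lam) (1/2) * cos (omg lam / 2)"
  "cc' lam = - 2 * (omg lam)^2 * sinc_w (omg lam) (1/2) * cos (omg lam / 2)"
proof -
  let ?w = "omg lam"
  have d1: "sin ?w = 2 * sin (?w/2) * cos (?w/2)" using sin_double[of "?w/2"] by simp
  have d2: "cos ?w = (cos (?w/2))^2 - (sin (?w/2))^2" using cos_double[of "?w/2"] by simp
  show "cc lam = (cos (?w / 2))^2 - ?w^2 * (sinc_w ?w (1/2))^2"
    using d2 by (cases "?w = 0") (auto simp: cc_def sinc_w_def power_divide)
  show "ss lam = 2 * sinc_w ?w (1/2) * cos (?w / 2)"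
    using d1 by (cases "?w = 0") (auto simp: ss_def sinc_w_def)
  show "cc' lam = - 2 * ?w^2 * sinc_w ?w (1/2) * cos (?w / 2)"
    using d1 by (cases "?w = 0") (auto simp: cc'_def sinc_w_def power2_eq_square)
qed

lemma W_generic:
  fixes c s c' m b r C S w :: complex
  assumes "c^2 - s*c' = 1" "c = C^2 - w^2 * S^2" "s = 2*S*C" "c' = -2*w^2*S*C"
  shows "(- (s*c*(1+r)) * C - (m - c^2 - s*c'*r) * S) * ((s*c*(1+b)) * (- (w^2) * S) + (m - c^2 - s*c'*b) * C)
     - (- (s*c*(1+r)) * (w^2) * S + (m - c^2 - s*c'*r) * C) * ((s*c*(1+b)) * C + (m - c^2 - s*c'*b) * S)
   = - s * (c^2 * (1+r) * (m-1) + (m - c^2 - s*c'*r) * (m + b))"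
proof -
  have "(- (s*c*(1+r)) * C - (m - c^2 - s*c'*r) * S) * ((s*c*(1+b)) * (- (w^2) * S) + (m - c^2 - s*c'*b) * C)
     - (- (s*c*(1+r)) * (w^2) * S + (m - c^2 - s*c'*r) * C) * ((s*c*(1+b)) * C + (m - c^2 - s*c'*b) * S)
     = - (s*c*(1+b))*(s*c*(1+r))*(-2*w^2*S*C) - (m - c^2 - s*c'*b)*(m - c^2 - s*c'*r)*(2*S*C)
       - (C^2 - w^2 * S^2) * ((s*c*(1+r))*(m - c^2 - s*c'*b) + (s*c*(1+b))*(m - c^2 - s*c'*r))"
    by algebra
  also have "\<dots> = - (s*c*(1+b))*(s*c*(1+r))*c' - (m - c^2 - s*c'*b)*(m - c^2 - s*c'*r)* s
       - c * ((s*c*(1+r))*(m - c^2 - s*c'*b) + (s*c*(1+b))*(m - c^2 - s*c'*r))"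
    using assms by simp
  also have "\<dots> = - s * (c^2 * (1+r) * (m-1) + (m - c^2 - s*c'*r) * (m + b))"
    using assms(1) by algebra
  finally show ?thesis .
qed

lemma Wr_formula:
  "Wr dR dB lam = - ss lam * ((cc lam)^2 * (1 + 1/of_nat dR) * (mu_minus dR dB lam - 1)
     + (mu_minus dR dB lam - (cc lam)^2 - ss lam * cc' lam * (1/of_nat dR)) * (mu_minus dR dB lam + 1/of_nat dB))"
proof -
  let ?w = "omg lam" and ?m = "mu_minus dR dB lam" and ?c = "cc lam" and ?s = "ss lam" and ?c' = "cc' lam"
  let ?b = "1/of_nat dB :: complex" and ?r = "1/of_nat dR :: complex"
  let ?S = "sinc_w ?w (1/2)" and ?C = "cos (?w/2)"
  have dV: "vector_derivative (Vf dR dB lam) (at (1/2)) =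
     (?s * ?c * (1 + ?b)) * (- (?w^2) * ?S) + (?m - ?c^2 - ?s * ?c' * ?b) * ?C"
    unfolding V_form by (rule vector_derivative_at[OF gen_V_deriv, THEN trans]) simp
  have dU: "vector_derivative (Uf dR dB lam) (at (1/2)) =
     - (?s * ?c * (1 + ?r)) * (?w^2) * ?S + (?m - ?c^2 - ?s * ?c' * ?r) * ?C"
    unfolding U_form by (rule vector_derivative_at[OF gen_U_deriv, THEN trans]) simp
  have V2: "Vf dR dB lam (1/2) = (?s * ?c * (1 + ?b)) * ?C + (?m - ?c^2 - ?s * ?c' * ?b) * ?S"
    by (simp add: Vf_def)
  have U2: "Uf dR dB lam (1/2) = - (?s * ?c * (1 + ?r)) * ?C - (?m - ?c^2 - ?s * ?c' * ?r) * ?S"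
    by (simp add: Uf_def)
  show ?thesis
    unfolding Wr_def dV dU V2 U2
    by (rule W_generic[OF cs_id half_angle])
qed


definition Qp :: "nat \<Rightarrow> nat \<Rightarrow> complex \<Rightarrow> complex \<Rightarrow> complex" where
  "Qp dR dB lam m = (m - 1) * (m - (1/of_nat dR) * (1/of_nat dB))
     - ss lam * cc' lam * m * (1 + 1/of_nat dB) * (1 + 1/of_nat dR)"

lemma char_generic:
  fixes c s c' r b m :: complex
  assumes "c^2 - s*c' = 1"
  shows "((c^2 + s*c'*b) - m) * ((s*c' + c^2*b)*r - m) - (s*c*(1+b)) * (c*c'*(1+b)*r)
     = (m - 1) * (m - r*b) - s*c'*m*(1+b)*(1+r)"
  using assms by algebra

lemma eig_T0: "is_eigenvalue2 (T0 dR dB lam) m \<longleftrightarrow> Qp dR dB lam m = 0"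
proof -
  let ?b = "1/of_nat dB :: complex" and ?r = "1/of_nat dR :: complex"
  have e: "T0 dR dB lam $1$1 = (cc lam)^2 + ss lam * cc' lam * ?b"
     "T0 dR dB lam $1$2 = ss lam * cc lam * (1 + ?b)"
     "T0 dR dB lam $2$1 = cc lam * cc' lam * (1 + ?b) * ?r"
     "T0 dR dB lam $2$2 = (ss lam * cc' lam + (cc lam)^2 * ?b) * ?r"
    by (simp_all add: T0_entries)
  show ?thesis unfolding eig2_iff e Qp_def
    using char_generic[OF cs_id[of lam], of ?b m ?r] by (simp add: mult.commute)
qed

lemma prod_lt: "(a::real) \<ge> 0 \<Longrightarrow> b \<ge> 0 \<Longrightarrow> a < r \<Longrightarrow> b < r \<Longrightarrow> a * b < r^2"
  by (metis mult_strict_mono' power2_eq_square)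

lemma prod_gt: "(a::real) \<ge> 0 \<Longrightarrow> b \<ge> 0 \<Longrightarrow> r > 0 \<Longrightarrow> a > r \<Longrightarrow> b > r \<Longrightarrow> a * b > r^2"
  by (metis mult_strict_mono' power2_eq_square less_imp_le)

lemma quad_unique:
  fixes t d :: complex and r :: real
  assumes r: "r > 0" and d: "cmod d = r^2"
    and nr: "\<And>m. m^2 - t*m + d = 0 \<Longrightarrow> cmod m \<noteq> r"
  shows "\<exists>!m. m^2 - t*m + d = 0 \<and> cmod m < r"
proof -
  define q where "q = csqrt (t^2 - 4*d)"
  define m1 where "m1 = (t + q)/2"
  define m2 where "m2 = (t - q)/2"
  have qq: "q^2 = t^2 - 4*d" unfolding q_def by simp
  have fac: "\<And>m. m^2 - t*m + d = (m - m1) * (m - m2)"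
    unfolding m1_def m2_def using qq by (simp add: field_simps power2_eq_square)
  have r1: "m1^2 - t*m1 + d = 0" and r2: "m2^2 - t*m2 + d = 0" using fac by auto
  have pr: "cmod m1 * cmod m2 = r^2"
  proof -
    have "m1 * m2 = d" using fac[of 0] by simp
    then show ?thesis using d by (metis norm_mult)
  qed
  have n1: "cmod m1 \<noteq> r" and n2: "cmod m2 \<noteq> r" using nr r1 r2 by auto
  have roots: "\<And>m. m^2 - t*m + d = 0 \<Longrightarrow> m = m1 \<or> m = m2" using fac by simp
  show ?thesis
  proof (cases "cmod m1 < r")
    case True
    have "\<not> cmod m2 < r" using prod_lt[OF norm_ge_zero norm_ge_zero True, of m2] pr by auto
    then show ?thesis using True r1 roots by blast
  next
    case False
    then have g1: "cmod m1 > r" using n1 by auto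
    have "cmod m2 < r" using prod_gt[OF norm_ge_zero norm_ge_zero r g1, of m2] pr n2 by force
    then show ?thesis using False r2 roots by blast
  qed
qed

lemma rad_sq: "dR \<ge> 1 \<Longrightarrow> dB \<ge> 1 \<Longrightarrow> (rad dR dB)^2 = 1 / (real dR * real dB)"
  unfolding rad_def by (simp add: power_divide mult.commute)

lemma rad_pos: "dR \<ge> 1 \<Longrightarrow> dB \<ge> 1 \<Longrightarrow> rad dR dB > 0"
  unfolding rad_def by simp

lemma Qp_expand: "Qp dR dB lam m = m^2 - (1 + (1/of_nat dR) * (1/of_nat dB)
   + ss lam * cc' lam * (1 + 1/of_nat dB) * (1 + 1/of_nat dR)) * m + (1/of_nat dR) * (1/of_nat dB)"
  unfolding Qp_def by algebra

lemma mu_minus_props: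
  assumes "dR \<ge> 1" "dB \<ge> 1" "lam \<notin> sigma1 dR dB"
  shows "Qp dR dB lam (mu_minus dR dB lam) = 0" "cmod (mu_minus dR dB lam) < rad dR dB"
proof -
  let ?t = "1 + (1/of_nat dR) * (1/of_nat dB)
   + ss lam * cc' lam * (1 + 1/of_nat dB) * (1 + 1/of_nat dR) :: complex"
  let ?d = "(1/of_nat dR) * (1/of_nat dB) :: complex"
  have d: "cmod ?d = (rad dR dB)^2" using assms(1,2)
    by (simp add: rad_sq norm_mult norm_divide)
  have nr: "\<And>m. m^2 - ?t*m + ?d = 0 \<Longrightarrow> cmod m \<noteq> rad dR dB"
    using assms(3) unfolding sigma1_def eig_T0 Qp_expand by auto
  have "\<exists>!m. m^2 - ?t*m + ?d = 0 \<and> cmod m < rad dR dB"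
    by (rule quad_unique[OF rad_pos[OF assms(1,2)] d nr])
  then have "\<exists>!m. is_eigenvalue2 (T0 dR dB lam) m \<and> cmod m < rad dR dB"
    unfolding eig_T0 Qp_expand .
  from theI'[OF this] show "Qp dR dB lam (mu_minus dR dB lam) = 0" "cmod (mu_minus dR dB lam) < rad dR dB"
    unfolding mu_minus_def eig_T0 by auto
qed


lemma W_times_generic:
  fixes c P r b m :: complex
  assumes "c^2 - P = 1" "(m - 1) * (m - r*b) - P*m*(1+b)*(1+r) = 0"
  shows "m * (c^2 * (1+r) * (m-1) + (m - c^2 - P*r) * (m + b)) = (m-1)*(m+r)*(m+b)"
  using assms by algebra

lemma rad_le1: "dR \<ge> 1 \<Longrightarrow> dB \<ge> 1 \<Longrightarrow> rad dR dB \<le> 1"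
proof -
  assume a: "dR \<ge> 1" "dB \<ge> 1"
  have "dB*dR \<ge> 1*1" using a by (intro mult_le_mono)
  then have "real (dB*dR) \<ge> 1" by linarith
  then have "sqrt (real (dB*dR)) \<ge> 1" by simp
  then show ?thesis unfolding rad_def by simp
qed

lemma rb_norm: "cmod ((1/of_nat dR) * (1/of_nat dB) :: complex) = 1 / (real dR * real dB)"
  by (simp add: norm_mult norm_divide)

lemma one_plus_inv_nz: "(1::complex) + 1/of_nat d \<noteq> 0"
proof -
  have e: "(1::complex) + 1/of_nat d = of_real (1 + 1/real d)" by simp
  have "1 + 1/real d > 0" by (simp add: add_pos_nonneg)
  then show ?thesis unfolding e by (metis of_real_eq_0_iff less_irrefl)
qed

lemma sigma2_cases:
  assumes "dR \<ge> 1" "dB \<ge> 1" "lam \<in> sigma2 dR dB"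
  shows "ss lam = 0 \<or> (cc lam = 0 \<and> (mu_minus dR dB lam = - (1/of_nat dR) \<or> mu_minus dR dB lam = - (1/of_nat dB)))"
proof -
  let ?m = "mu_minus dR dB lam" and ?r = "1/of_nat dR :: complex" and ?b = "1/of_nat dB :: complex"
  let ?P = "ss lam * cc' lam"
  have ns: "lam \<notin> sigma1 dR dB" and W0: "Wr dR dB lam = 0" using assms(3) unfolding sigma2_def by auto
  note mp = mu_minus_props[OF assms(1,2) ns]
  have Q: "(?m - 1) * (?m - ?r*?b) - ?P * ?m *(1+?b)*(1+?r) = 0" using mp(1) unfolding Qp_def by (simp add: mult.assoc)
  have e: "?m * ((cc lam)^2 * (1+?r) * (?m-1) + (?m - (cc lam)^2 - ?P*?r) * (?m + ?b)) = (?m-1)*(?m+?r)*(?m+?b)"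
    by (rule W_times_generic[OF cs_id Q])
  have "?m * Wr dR dB lam = - ss lam * (?m * ((cc lam)^2 * (1+?r) * (?m-1) + (?m - (cc lam)^2 - ?P*?r) * (?m + ?b)))"
    unfolding Wr_formula by algebra
  then have "?m * Wr dR dB lam = - ss lam * ((?m-1)*(?m+?r)*(?m+?b))" using e by simp
  then have "ss lam * ((?m-1)*(?m+?r)*(?m+?b)) = 0" using W0 by simp
  then have "ss lam = 0 \<or> ?m - 1 = 0 \<or> ?m + ?r = 0 \<or> ?m + ?b = 0" by (simp only: mult_eq_0_iff) blast
  then have "ss lam = 0 \<or> ?m = 1 \<or> ?m = - ?r \<or> ?m = - ?b"
    by (metis eq_neg_iff_add_eq_0 right_minus_eq)
  moreover have "?m \<noteq> 1" using mp(2) rad_le1[OF assms(1,2)] by auto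
  moreover have "cc lam = 0" if "?m = - ?r \<or> ?m = - ?b"
  proof -
    have "?r \<noteq> 0" "?b \<noteq> 0" using assms(1,2) by auto
    have "?r * (1+?r) * (1+?b) * (1 + ?P) = 0 \<or> ?b * (1+?r) * (1+?b) * (1 + ?P) = 0"
    proof (cases "?m = - ?r")
    case True
    have "?r * (1+?r) * (1+?b) * (1 + ?P) = 0" using True Q by algebra
    then show ?thesis by blast
  next
    case False
    then have "?m = - ?b" using that by blast
    have "?b * (1+?r) * (1+?b) * (1 + ?P) = 0" using \<open>?m = - ?b\<close> Q by algebra
    then show ?thesis by blast
  qed
    moreover have "1 + ?r \<noteq> 0" "1 + ?b \<noteq> 0"
      by (rule one_plus_inv_nz)+
    ultimately have "1 + ?P = 0" using \<open>?r \<noteq> 0\<close> \<open>?b \<noteq> 0\<close> by auto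
    then show ?thesis using cs_id[of lam] by (simp add: algebra_simps)
  qed
  ultimately show ?thesis by blast
qed


definition Zset :: "complex set" where
  "Zset = {z. \<exists>k::int. z = of_real (of_int k * pi^2 / 4)}"

lemma omg_sq: "(omg lam)^2 = lam" unfolding omg_def by simp

lemma ss0_omega: "ss lam = 0 \<Longrightarrow> omg lam \<noteq> 0 \<and> sin (omg lam) = 0"
  unfolding ss_def sinc_w_def by (auto split: if_splits)

lemma ss0_Z: assumes "ss lam = 0" shows "lam \<in> Zset"
proof -
  obtain n :: int where n: "omg lam = of_real (n * pi)" using ss0_omega[OF assms] sin_eq_0 by blast
  have "lam = (omg lam)^2" by (simp add: omg_sq)
  also have "\<dots> = of_real (of_int (4*n^2) * pi^2 / 4)" unfolding n
    by (simp add: power_mult_distrib power2_eq_square)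
  finally show ?thesis unfolding Zset_def by blast
qed

lemma cc0_Z: assumes "cc lam = 0" shows "lam \<in> Zset"
proof -
  obtain n :: int where n: "omg lam = of_real (n * pi) + of_real pi / 2"
    using assms cos_eq_0 unfolding cc_def by blast
  have "lam = (omg lam)^2" by (simp add: omg_sq)
  also have "\<dots> = of_real (of_int ((2*n+1)^2) * pi^2 / 4)" unfolding n
    by (simp add: power2_eq_square field_simps)
  finally show ?thesis unfolding Zset_def by blast
qed

lemma Z_real: "Zset \<subseteq> \<real>"
proof
  fix z assume "z \<in> Zset"
  then obtain k :: int where "z = of_real (of_int k * pi^2 / 4)" unfolding Zset_def by blast
  then show "z \<in> \<real>" by (metis Reals_of_real)
qed

lemma discrete_sub_Z:
  assumes "S \<subseteq> Zset" shows "discrete S"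
proof (rule discreteI)
  fix x assume x: "x \<in> S"
  have pp: "pi^2/4 > 0" by simp
  show "x isolated_in S"
    unfolding isolated_in_dist_Ex_iff
  proof (intro conjI x exI[of _ "pi^2/4"] pp ballI impI)
    fix y assume y: "y \<in> S" and d: "dist x y < pi^2/4"
    obtain k :: int where k: "x = of_real (of_int k * pi^2/4)" using x assms unfolding Zset_def by blast
    obtain k' :: int where k': "y = of_real (of_int k' * pi^2/4)" using y assms unfolding Zset_def by blast
    have e1: "of_int k * pi^2/4 - of_int k' * pi^2/4 = (of_int k - of_int k') * (pi^2/4)"
      by (simp add: algebra_simps)
    have "dist x y = \<bar>of_int k * pi^2/4 - of_int k' * pi^2/4\<bar>"
      unfolding k k' dist_complex_def of_real_diff[symmetric] norm_of_real ..
    also have "\<dots> = \<bar>of_int k - of_int k'\<bar> * (pi^2/4)" unfolding e1 abs_mult by simp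
    finally have "dist x y = \<bar>of_int k - of_int k'\<bar> * (pi^2/4)" .
    then have "\<bar>of_int k - of_int k'\<bar> * (pi^2/4) < 1 * (pi^2/4)" using d by simp
    then have "\<bar>of_int k - of_int k' :: real\<bar> < 1" using pp by (meson mult_less_cancel_right_pos)
    then have "k = k'" by linarith
    then show "y = x" unfolding k k' by (simp only:)
  qed
qed

lemma part1:
  assumes "dR \<ge> 1" "dB \<ge> 1"
  shows "sigma2 dR dB \<subseteq> \<real> - sigma1 dR dB \<and> discrete (sigma2 dR dB)"
proof -
  have Z: "sigma2 dR dB \<subseteq> Zset"
    using sigma2_cases[OF assms] ss0_Z cc0_Z by blast
  then show ?thesis using Z_real discrete_sub_Z unfolding sigma2_def by blast
qed

lemma rad_lt1: assumes "dR * dB > 1" shows "rad dR dB < 1" "rad dR dB > 0" "(rad dR dB)^2 = 1/(real dR * real dB)"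
proof -
  have "dR \<noteq> 0" "dB \<noteq> 0" using assms by (cases "dR = 0"; cases "dB = 0"; simp)+
  then have a: "dR \<ge> 1" "dB \<ge> 1" by linarith+
  show "(rad dR dB)^2 = 1/(real dR * real dB)" using rad_sq[OF a] .
  show p: "rad dR dB > 0" using rad_pos[OF a] .
  have "real dR * real dB > 1" using assms by (metis of_nat_1 of_nat_less_iff of_nat_mult)
  then have "(rad dR dB)^2 < 1" using rad_sq[OF a] by simp
  then show "rad dR dB < 1" using p by (smt (verit) one_le_power)
qed

lemma part2:
  assumes "dR * dB > 1" "ss lam = 0"
  shows "lam \<in> sigma2 dR dB"
proof -
  note R = rad_lt1[OF assms(1)]
  have "dR \<noteq> 0" "dB \<noteq> 0" using assms by (cases "dR = 0"; cases "dB = 0"; simp)+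
  then have a: "dR \<ge> 1" "dB \<ge> 1" by linarith+
  have "lam \<notin> sigma1 dR dB"
  proof
    assume "lam \<in> sigma1 dR dB"
    then obtain m where Q: "Qp dR dB lam m = 0" and nm: "cmod m = rad dR dB"
      unfolding sigma1_def eig_T0 by blast
    have "(m - 1) * (m - (1/of_nat dR) * (1/of_nat dB)) = 0" using Q assms(2) unfolding Qp_def by simp
    then have "m = 1 \<or> m = (1/of_nat dR) * (1/of_nat dB)" by simp
    then show False
    proof
      assume "m = 1" then show False using nm R by simp
    next
      assume "m = (1/of_nat dR) * (1/of_nat dB)"
      then have "rad dR dB = (rad dR dB)^2" using nm rb_norm R(3) by simp
      then show False using R(1,2) by (simp add: power2_eq_square)
    qed
  qed
  moreover have "Wr dR dB lam = 0" unfolding Wr_formula using assms(2) by simp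
  ultimately show ?thesis unfolding sigma2_def by blast
qed

lemma m_s0:
  assumes "dR \<ge> 1" "dB \<ge> 1" "lam \<notin> sigma1 dR dB" "ss lam = 0"
  shows "mu_minus dR dB lam = (1/of_nat dR) * (1/of_nat dB)" "dR * dB > 1"
proof -
  note mp = mu_minus_props[OF assms(1-3)]
  let ?m = "mu_minus dR dB lam"
  have "(?m - 1) * (?m - (1/of_nat dR) * (1/of_nat dB)) = 0" using mp(1) assms(4) unfolding Qp_def by simp
  moreover have "?m \<noteq> 1" using mp(2) rad_le1[OF assms(1,2)] by auto
  ultimately show m: "?m = (1/of_nat dR) * (1/of_nat dB)" by simp
  show "dR * dB > 1"
  proof (rule ccontr)
    assume "\<not> dR * dB > 1"
    then have le: "dR * dB \<le> 1" by simp
    have "dR \<le> dR * dB" using mult_le_mono[of dR dR 1 dB] assms(2) by simp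
    moreover have "dB \<le> dR * dB" using mult_le_mono[of 1 dR dB dB] assms(1) by simp
    ultimately have "dR = 1" "dB = 1" using le assms(1,2) by linarith+
    then show False using mp(2) m unfolding rad_def by simp
  qed
qed

lemma sin_point:
  fixes w :: complex
  assumes "w \<noteq> 0" "sin w = 0"
  shows "\<exists>x\<in>{0..1}. sin (w * of_real x) \<noteq> 0"
proof -
  obtain n :: int where n: "w = of_real (n * pi)" using assms(2) sin_eq_0 by blast
  have n0: "n \<noteq> 0" using assms(1) n by auto
  define x where "x = 1 / (2 * \<bar>real_of_int n\<bar>)"
  have x01: "x \<in> {0..1}" unfolding x_def using n0 by (auto simp: field_simps)
  have "w * of_real x = of_real (n * pi * x)" unfolding n by simp
  moreover have "n * pi * x = (if n > 0 then pi/2 else - (pi/2))"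
    unfolding x_def using n0 by (auto simp: field_simps)
  ultimately have "sin (w * of_real x) = of_real (if n > 0 then 1 else -1)"
    by (simp add: sin_of_real[symmetric] del: sin_of_real)
  then show ?thesis using x01 by (intro bexI[of _ x]) auto
qed

lemma part3:
  assumes "dR \<ge> 1" "dB \<ge> 1" "lam \<in> sigma2 dR dB" "ss lam = 0"
  shows "(\<exists>x\<in>{0..1}. Uf dR dB lam x \<noteq> 0) \<and> (\<exists>x\<in>{0..1}. Vf dR dB lam x \<noteq> 0)"
proof -
  have ns: "lam \<notin> sigma1 dR dB" using assms(3) unfolding sigma2_def by auto
  note ms = m_s0[OF assms(1,2) ns assms(4)]
  let ?k = "(1/of_nat dR) * (1/of_nat dB) - 1 :: complex"
  have c2: "(cc lam)^2 = 1" using cs_id[of lam] assms(4) by simp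
  have k: "?k \<noteq> 0"
  proof
    assume "?k = 0"
    then have "(1/of_nat dR) * (1/of_nat dB) = (1::complex)" by simp
    then have "of_nat (dR * dB) = (1::complex)" using assms(1,2) by (simp add: field_simps)
    then have "dR * dB = 1" by (metis of_nat_1 of_nat_eq_iff)
    then show False using ms(2) by simp
  qed
  have V: "\<And>x. Vf dR dB lam x = ?k * sinc_w (omg lam) (of_real x)"
    unfolding Vf_def using assms(4) ms(1) c2 by simp
  have U: "\<And>x. Uf dR dB lam x = - ?k * sinc_w (omg lam) (of_real (1 - x))"
    unfolding Uf_def using assms(4) ms(1) c2 by (simp add: algebra_simps)
  obtain x where x: "x \<in> {0..1}" "sin (omg lam * of_real x) \<noteq> 0"
    using sin_point ss0_omega[OF assms(4)] by blast
  have w0: "omg lam \<noteq> 0" using ss0_omega[OF assms(4)] by blast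
  have "Vf dR dB lam x \<noteq> 0" unfolding V sinc_w_def using w0 x k by simp
  moreover have "Uf dR dB lam (1 - x) \<noteq> 0" unfolding U sinc_w_def using w0 x k by simp
  moreover have "1 - x \<in> {0..1}" using x by auto
  ultimately show ?thesis using x by blast
qed

lemma part4_prep:
  assumes "dR \<ge> 1" "dB \<ge> 1" "lam \<in> sigma2 dR dB"
    and "\<exists>x\<in>{0..1}. Uf dR dB lam x \<noteq> 0" "\<exists>x\<in>{0..1}. Vf dR dB lam x \<noteq> 0"
  shows "ss lam = 0" "dR * dB > 1"
proof -
  have ns: "lam \<notin> sigma1 dR dB" using assms(3) unfolding sigma2_def by auto
  show s0: "ss lam = 0"
  proof (rule ccontr)
    assume "ss lam \<noteq> 0"
    then have c0: "cc lam = 0" and mm: "mu_minus dR dB lam = - (1/of_nat dR) \<or> mu_minus dR dB lam = - (1/of_nat dB)"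
      using sigma2_cases[OF assms(1-3)] by auto
    have P: "ss lam * cc' lam = -1" using cs_id[of lam] c0 by algebra
    show False using mm
    proof
      assume "mu_minus dR dB lam = - (1/of_nat dR)"
      then have "\<And>x. Uf dR dB lam x = 0" unfolding Uf_def using c0 P by simp
      then show False using assms(4) by blast
    next
      assume "mu_minus dR dB lam = - (1/of_nat dB)"
      then have "\<And>x. Vf dR dB lam x = 0" unfolding Vf_def using c0 P by simp
      then show False using assms(5) by blast
    qed
  qed
  show "dR * dB > 1" using m_s0[OF assms(1,2) ns s0] by blast
qed


definition dst :: "('v \<Rightarrow> 'v \<Rightarrow> bool) \<Rightarrow> 'v \<Rightarrow> 'v \<Rightarrow> nat" where
  "dst adj \<rho> v = (LEAST n. (adj ^^ n) \<rho> v)"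

lemma rtranclp_sym:
  assumes "\<And>x y. R x y \<Longrightarrow> R y x" "R\<^sup>*\<^sup>* x y"
  shows "R\<^sup>*\<^sup>* y x"
  using assms(2)
proof (induction rule: rtranclp_induct)
  case base then show ?case by simp
next
  case (step y z)
  then show ?case using assms(1) by (meson converse_rtranclp_into_rtranclp)
qed

locale btree =
  fixes dR dB :: nat and red :: "'v \<Rightarrow> bool" and adj :: "'v \<Rightarrow> 'v \<Rightarrow> bool"
  assumes T: "biregular_tree dR dB red adj" and dR1: "dR \<ge> 1" and dB1: "dB \<ge> 1"
begin

definition dg :: "'v \<Rightarrow> nat" where "dg v = (if red v then dR else dB)"
definition D :: "'v \<Rightarrow> 'v \<Rightarrow> nat" where "D = dst adj"
definition dcol :: "'v \<Rightarrow> nat \<Rightarrow> nat" where "dcol \<rho> k = (if (red \<rho> \<longleftrightarrow> even k) then dR else dB)"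
definition lev :: "'v \<Rightarrow> nat \<Rightarrow> 'v set" where "lev \<rho> n = {v. D \<rho> v = n}"

lemma sym: "adj u v \<Longrightarrow> adj v u" using T unfolding biregular_tree_def by blast
lemma bip: "adj u v \<Longrightarrow> red u \<noteq> red v" using T unfolding biregular_tree_def by blast
lemma nb_fin: "finite {u. adj v u}" using T unfolding biregular_tree_def by (cases "red v") auto
lemma nb_card: "card {u. adj v u} = dg v + 1" using T unfolding biregular_tree_def dg_def by (cases "red v") auto
lemma conn: "adj\<^sup>*\<^sup>* u v" using T unfolding biregular_tree_def by blast
lemma acyc: "adj u v \<Longrightarrow> \<not> (\<lambda>x y. adj x y \<and> {x, y} \<noteq> {u, v})\<^sup>*\<^sup>* u v"
  using T unfolding biregular_tree_def by blast

lemma dg_pos: "dg v \<ge> 1" using dR1 dB1 unfolding dg_def by auto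

lemma D_path: "(adj ^^ D \<rho> v) \<rho> v"
proof -
  obtain n where "(adj ^^ n) \<rho> v" using rtranclp_imp_relpowp[OF conn] by blast
  then show ?thesis unfolding D_def dst_def by (rule LeastI)
qed

lemma D_le: "(adj ^^ n) \<rho> v \<Longrightarrow> D \<rho> v \<le> n"
  unfolding D_def dst_def by (rule Least_le)

lemma D_self[simp]: "D \<rho> \<rho> = 0"
  using D_le[of 0 \<rho> \<rho>] by simp

lemma D_zero: "D \<rho> v = 0 \<longleftrightarrow> v = \<rho>"
proof
  assume "D \<rho> v = 0"
  then show "v = \<rho>" using D_path[of \<rho> v] by simp
qed simp

lemma parity: "(adj ^^ n) \<rho> v \<Longrightarrow> (red v \<longleftrightarrow> (red \<rho> \<longleftrightarrow> even n))"
proof (induction n arbitrary: v)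
  case 0 then show ?case by simp
next
  case (Suc n)
  then obtain y where "(adj ^^ n) \<rho> y" "adj y v" by (meson relpowp_Suc_E)
  then show ?case using Suc.IH bip by fastforce
qed

lemma D_red: "red v \<longleftrightarrow> (red \<rho> \<longleftrightarrow> even (D \<rho> v))"
  using parity[OF D_path] .

lemma dg_dcol: "dg v = dcol \<rho> (D \<rho> v)"
  unfolding dg_def dcol_def using D_red[of v \<rho>] by auto

lemma D_adj_le: "adj u v \<Longrightarrow> D \<rho> v \<le> Suc (D \<rho> u)"
  using D_le[OF relpowp_Suc_I[OF D_path]] by blast

lemma D_adj: "adj u v \<Longrightarrow> D \<rho> v = Suc (D \<rho> u) \<or> D \<rho> u = Suc (D \<rho> v)"
proof -
  assume a: "adj u v"
  have "D \<rho> v \<le> Suc (D \<rho> u)" "D \<rho> u \<le> Suc (D \<rho> v)" using D_adj_le a sym by blast+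
  moreover have "D \<rho> u \<noteq> D \<rho> v" using D_red[of u \<rho>] D_red[of v \<rho>] bip[OF a] by auto
  ultimately show ?thesis by linarith
qed

lemma D_parent: "D \<rho> v = Suc n \<Longrightarrow> \<exists>u. adj v u \<and> D \<rho> u = n"
proof -
  assume d: "D \<rho> v = Suc n"
  have "(adj ^^ Suc n) \<rho> v" using D_path[of \<rho> v] d by simp
  then obtain u where u: "(adj ^^ n) \<rho> u" "adj u v" by (meson relpowp_Suc_E)
  have "D \<rho> u \<le> n" using D_le[OF u(1)] .
  moreover have "D \<rho> v \<le> Suc (D \<rho> u)" using D_adj_le[OF u(2)] .
  ultimately have "D \<rho> u = n" using d by linarith
  then show ?thesis using u(2) sym by blast
qed

lemma unique_parent:
  assumes d: "D \<rho> v = Suc n" and a1: "adj v p1" and a2: "adj v p2" and "D \<rho> p1 = n" "D \<rho> p2 = n"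
  shows "p1 = p2"
proof (rule ccontr)
  assume ne: "p1 \<noteq> p2"
  define G where "G = (\<lambda>x y. adj x y \<and> {x, y} \<noteq> {p1, v})"
  have Gs: "\<And>x y. G x y \<Longrightarrow> G y x" unfolding G_def using sym by (auto simp: insert_commute)
  have reach: "\<And>u. D \<rho> u = k \<Longrightarrow> k \<le> n \<Longrightarrow> G\<^sup>*\<^sup>* \<rho> u" for k
  proof (induction k)
    case 0 then show ?case using D_zero by auto
  next
    case (Suc k u)
    obtain w where w: "adj u w" "D \<rho> w = k" using D_parent[OF Suc.prems(1)] by blast
    have "G\<^sup>*\<^sup>* \<rho> w" using Suc.IH[OF w(2)] Suc.prems(2) by simp
    moreover have "G w u"
    proof -
      have "v \<noteq> u" "v \<noteq> w" using d Suc.prems w(2) by auto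
      then have "{w, u} \<noteq> {p1, v}" by auto
      then show ?thesis unfolding G_def using sym[OF w(1)] by blast
    qed
    ultimately show ?case by (rule rtranclp.rtrancl_into_rtrancl)
  qed
  have "G\<^sup>*\<^sup>* p1 \<rho>" using rtranclp_sym[OF Gs reach[OF assms(4)]] by simp
  moreover have "G\<^sup>*\<^sup>* \<rho> p2" using reach[OF assms(5)] by simp
  moreover have "G p2 v"
  proof -
    have "p2 \<noteq> v" using d assms(5) by auto
    then have "{p2, v} \<noteq> {p1, v}" using ne by (auto simp: doubleton_eq_iff)
    then show ?thesis unfolding G_def using sym[OF a2] by blast
  qed
  ultimately have "G\<^sup>*\<^sup>* p1 v" by (meson rtranclp.rtrancl_into_rtrancl rtranclp_trans)
  then show False using acyc[OF sym[OF a1]] unfolding G_def by blast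
qed

lemma lev_Suc_sub: "lev \<rho> (Suc n) \<subseteq> (\<Union>u\<in>lev \<rho> n. {w. adj u w} \<inter> lev \<rho> (Suc n))"
proof
  fix v assume "v \<in> lev \<rho> (Suc n)"
  then obtain u where "adj v u" "D \<rho> u = n" using D_parent unfolding lev_def by blast
  then show "v \<in> (\<Union>u\<in>lev \<rho> n. {w. adj u w} \<inter> lev \<rho> (Suc n))"
    using sym \<open>v \<in> lev \<rho> (Suc n)\<close> unfolding lev_def by blast
qed

lemma lev_fin: "finite (lev \<rho> n)"
proof (induction n)
  case 0
  have "lev \<rho> 0 = {\<rho>}" unfolding lev_def using D_zero by auto
  then show ?case by simp
next
  case (Suc n)
  show ?case by (rule finite_subset[OF lev_Suc_sub]) (use Suc nb_fin in auto)
qed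

lemma lev_card: assumes "n \<ge> 1" shows "card (lev \<rho> (Suc n)) \<le> dcol \<rho> n * card (lev \<rho> n)"
proof -
  have "card (lev \<rho> (Suc n)) \<le> card (\<Union>u\<in>lev \<rho> n. {w. adj u w} \<inter> lev \<rho> (Suc n))"
    by (rule card_mono[OF _ lev_Suc_sub]) (use lev_fin nb_fin in auto)
  also have "\<dots> \<le> (\<Sum>u\<in>lev \<rho> n. card ({w. adj u w} \<inter> lev \<rho> (Suc n)))"
    by (rule card_UN_le[OF lev_fin])
  also have "\<dots> \<le> (\<Sum>u\<in>lev \<rho> n. dcol \<rho> n)"
  proof (rule sum_mono)
    fix u assume u: "u \<in> lev \<rho> n"
    obtain m where m: "n = Suc m" using assms by (cases n) auto
    obtain p where p: "adj u p" "D \<rho> p = m" using D_parent[of \<rho> u m] u m unfolding lev_def by auto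
    have "{w. adj u w} \<inter> lev \<rho> (Suc n) \<subseteq> {w. adj u w} - {p}"
      using p m unfolding lev_def by auto
    then have "card ({w. adj u w} \<inter> lev \<rho> (Suc n)) \<le> card ({w. adj u w} - {p})"
      by (intro card_mono) (use nb_fin in auto)
    also have "\<dots> = dg u" using p(1) nb_card[of u] nb_fin[of u] by simp
    also have "\<dots> = dcol \<rho> n" using dg_dcol[of u \<rho>] u unfolding lev_def by simp
    finally show "card ({w. adj u w} \<inter> lev \<rho> (Suc n)) \<le> dcol \<rho> n" .
  qed
  also have "\<dots> = dcol \<rho> n * card (lev \<rho> n)" by simp
  finally show ?thesis .
qed

end


fun gamf :: "(nat \<Rightarrow> nat) \<Rightarrow> nat \<Rightarrow> real" where
  "gamf dc 0 = 1"
| "gamf dc (Suc n) = - gamf dc n / real (dc (Suc n))"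

context btree begin

definition gam :: "'v \<Rightarrow> nat \<Rightarrow> real" where "gam \<rho> = gamf (dcol \<rho>)"
definition Asym :: "'v \<Rightarrow> 'v \<Rightarrow> 'v \<Rightarrow> real" where "Asym \<rho> u v = gam \<rho> (min (D \<rho> u) (D \<rho> v))"

lemma gam_0[simp]: "gam \<rho> 0 = 1" unfolding gam_def by simp
lemma gam_Suc: "gam \<rho> (Suc n) = - gam \<rho> n / real (dcol \<rho> (Suc n))" unfolding gam_def by simp
lemma dcol_pos: "dcol \<rho> k \<ge> 1" using dR1 dB1 unfolding dcol_def by auto
lemma dcol_prod: "dcol \<rho> k * dcol \<rho> (Suc k) = dR * dB" unfolding dcol_def by auto

lemma Asym_sym: "Asym \<rho> u v = Asym \<rho> v u" unfolding Asym_def by (simp add: min.commute)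

lemma kir_other:
  assumes "v \<noteq> \<rho>"
  shows "(\<Sum>u\<in>{u. adj v u}. Asym \<rho> v u) = 0"
proof -
  obtain n where n: "D \<rho> v = Suc n" using assms D_zero by (cases "D \<rho> v") auto
  obtain p where p: "adj v p" "D \<rho> p = n" using D_parent[OF n] by blast
  have rest: "\<And>u. u \<in> {u. adj v u} - {p} \<Longrightarrow> Asym \<rho> v u = gam \<rho> (Suc n)"
  proof -
    fix u assume u: "u \<in> {u. adj v u} - {p}"
    have "D \<rho> u = Suc (D \<rho> v) \<or> D \<rho> v = Suc (D \<rho> u)" using D_adj u by blast
    moreover have "D \<rho> u \<noteq> n" using unique_parent[OF n p(1), of u] p u by auto
    ultimately have "D \<rho> u = Suc (Suc n)" using n by auto
    then show "Asym \<rho> v u = gam \<rho> (Suc n)" unfolding Asym_def n by simp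
  qed
  have fin: "finite {u. adj v u}" by (rule nb_fin)
  have "(\<Sum>u\<in>{u. adj v u}. Asym \<rho> v u) = Asym \<rho> v p + (\<Sum>u\<in>{u. adj v u} - {p}. Asym \<rho> v u)"
    using p(1) fin by (simp add: sum.remove)
  also have "\<dots> = gam \<rho> n + real (card ({u. adj v u} - {p})) * gam \<rho> (Suc n)"
    using rest unfolding Asym_def using n p by simp
  also have "card ({u. adj v u} - {p}) = dg v" using p(1) nb_card[of v] fin by simp
  also have "dg v = dcol \<rho> (Suc n)" using dg_dcol[of v \<rho>] n by simp
  also have "gam \<rho> n + real (dcol \<rho> (Suc n)) * gam \<rho> (Suc n) = 0"
    using dcol_pos[of \<rho> "Suc n"] unfolding gam_Suc by simp
  finally show ?thesis .
qed

lemma kir_root: "(\<Sum>u\<in>{u. adj \<rho> u}. Asym \<rho> \<rho> u) = real (dg \<rho> + 1)"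
proof -
  have "(\<Sum>u\<in>{u. adj \<rho> u}. Asym \<rho> \<rho> u) = (\<Sum>u\<in>{u. adj \<rho> u}. 1)"
    unfolding Asym_def by simp
  also have "\<dots> = real (dg \<rho> + 1)" using nb_card[of \<rho>] by simp
  finally show ?thesis .
qed

definition q :: "'v \<Rightarrow> nat \<Rightarrow> real" where "q \<rho> n = real (card (lev \<rho> n)) * (gam \<rho> (n - 1))^2"

lemma q_nonneg: "q \<rho> n \<ge> 0" unfolding q_def by simp

lemma q_step: assumes "n \<ge> 1" shows "q \<rho> (Suc n) * real (dcol \<rho> n) \<le> q \<rho> n"
proof -
  obtain m where m: "n = Suc m" using assms by (cases n) auto
  define d where "d = real (dcol \<rho> n)"
  have dpos: "d > 0" using dcol_pos[of \<rho> n] unfolding d_def by simp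
  have gs: "gam \<rho> n = - gam \<rho> (n-1) / d" unfolding m d_def gam_Suc by simp
  have g: "(gam \<rho> n)^2 * d = (gam \<rho> (n-1))^2 / d"
    unfolding gs using dpos by (simp add: power2_eq_square)
  have c: "real (card (lev \<rho> (Suc n))) \<le> d * real (card (lev \<rho> n))"
    using lev_card[OF assms, of \<rho>] unfolding d_def by (metis of_nat_le_iff of_nat_mult)
  have "q \<rho> (Suc n) * d = real (card (lev \<rho> (Suc n))) * ((gam \<rho> n)^2 * d)"
    unfolding q_def by simp
  also have "\<dots> = real (card (lev \<rho> (Suc n))) * (gam \<rho> (n-1))^2 / d" unfolding g by simp
  also have "\<dots> \<le> d * real (card (lev \<rho> n)) * (gam \<rho> (n-1))^2 / d"
    by (intro divide_right_mono mult_right_mono c) (use dpos in auto)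
  also have "\<dots> = q \<rho> n" unfolding q_def using dpos by simp
  finally show ?thesis unfolding d_def .
qed

lemma q_step2: assumes "n \<ge> 1" "dR * dB > 1" shows "2 * q \<rho> (Suc (Suc n)) \<le> q \<rho> n"
proof -
  define d0 where "d0 = real (dcol \<rho> n)"
  define d1 where "d1 = real (dcol \<rho> (Suc n))"
  have a: "q \<rho> (Suc (Suc n)) * d1 \<le> q \<rho> (Suc n)" using q_step[of "Suc n"] unfolding d1_def by simp
  have b: "q \<rho> (Suc n) * d0 \<le> q \<rho> n" using q_step[OF assms(1)] unfolding d0_def .
  have dp: "d0 \<ge> 0" unfolding d0_def by simp
  have "q \<rho> (Suc (Suc n)) * d1 * d0 \<le> q \<rho> (Suc n) * d0" using mult_right_mono[OF a dp] .
  then have c: "q \<rho> (Suc (Suc n)) * (d0 * d1) \<le> q \<rho> n" using b by (simp add: mult_ac)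
  have "dcol \<rho> n * dcol \<rho> (Suc n) \<ge> 2" using dcol_prod[of \<rho> n] assms(2) by simp
  then have "real (dcol \<rho> n * dcol \<rho> (Suc n)) \<ge> 2" by linarith
  then have x: "d0 * d1 \<ge> 2" unfolding d0_def d1_def by (simp only: of_nat_mult)
  have "q \<rho> (Suc (Suc n)) * 2 \<le> q \<rho> (Suc (Suc n)) * (d0 * d1)"
    by (rule mult_left_mono[OF x q_nonneg])
  then show ?thesis using c by linarith
qed

lemma q_sum: assumes "dR * dB > 1"
  shows "(\<Sum>n\<in>{1..M}. q \<rho> n) + 2 * q \<rho> (Suc M) + 2 * q \<rho> (Suc (Suc M)) \<le> 2 * q \<rho> 1 + 2 * q \<rho> 2"
proof (induction M)
  case 0 then show ?case by (simp add: numeral_2_eq_2)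
next
  case (Suc M)
  have x: "2 * q \<rho> (Suc (Suc (Suc M))) \<le> q \<rho> (Suc M)" using q_step2[of "Suc M", OF _ assms] by simp
  have "(\<Sum>n\<in>{1..Suc M}. q \<rho> n) = (\<Sum>n\<in>{1..M}. q \<rho> n) + q \<rho> (Suc M)"
    by (simp add: sum.cl_ivl_Suc)
  then show ?case using Suc.IH x by linarith
qed

definition G :: "'v \<Rightarrow> 'v \<Rightarrow> real" where "G \<rho> v = (gam \<rho> (D \<rho> v - 1))^2"

lemma G_summable: assumes "dR * dB > 1" shows "G \<rho> summable_on {v. v \<noteq> \<rho>}"
proof (rule nonneg_bdd_above_summable_on)
  show "\<And>x. x \<in> {v. v \<noteq> \<rho>} \<Longrightarrow> 0 \<le> G \<rho> x" unfolding G_def by simp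
  show "bdd_above (sum (G \<rho>) ` {F. F \<subseteq> {v. v \<noteq> \<rho>} \<and> finite F})"
  proof (rule bdd_aboveI2)
    fix F assume F: "F \<in> {F. F \<subseteq> {v. v \<noteq> \<rho>} \<and> finite F}"
    define M where "M = Max (insert 0 (D \<rho> ` F))"
    have finF: "finite F" using F by auto
    have sub: "F \<subseteq> (\<Union>n\<in>{1..M}. lev \<rho> n)"
    proof
      fix v assume v: "v \<in> F"
      have "D \<rho> v \<noteq> 0" using v F D_zero by auto
      moreover have "D \<rho> v \<le> M" unfolding M_def using v finF by (intro Max_ge) auto
      ultimately show "v \<in> (\<Union>n\<in>{1..M}. lev \<rho> n)" unfolding lev_def by auto
    qed
    have finU: "finite (\<Union>n\<in>{1..M}. lev \<rho> n)" using lev_fin by auto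
    have "sum (G \<rho>) F \<le> sum (G \<rho>) (\<Union>n\<in>{1..M}. lev \<rho> n)"
      by (rule sum_mono2[OF finU sub]) (simp add: G_def)
    also have "\<dots> = (\<Sum>n\<in>{1..M}. sum (G \<rho>) (lev \<rho> n))"
      by (rule sum.UNION_disjoint) (auto simp: lev_fin[unfolded lev_def] lev_def)
    also have "\<dots> = (\<Sum>n\<in>{1..M}. q \<rho> n)"
    proof (rule sum.cong[OF refl])
      fix n assume "n \<in> {1..M}"
      have "sum (G \<rho>) (lev \<rho> n) = (\<Sum>v\<in>lev \<rho> n. (gam \<rho> (n - 1))^2)"
        by (rule sum.cong) (auto simp: G_def lev_def)
      then show "sum (G \<rho>) (lev \<rho> n) = q \<rho> n" unfolding q_def by simp
    qed
    also have "\<dots> \<le> 2 * q \<rho> 1 + 2 * q \<rho> 2"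
      using q_sum[OF assms, of \<rho> M] q_nonneg[of \<rho> "Suc M"] q_nonneg[of \<rho> "Suc (Suc M)"] by linarith
    finally show "sum (G \<rho>) F \<le> 2 * q \<rho> 1 + 2 * q \<rho> 2" .
  qed
qed

definition ch :: "'v \<Rightarrow> 'v \<times> 'v \<Rightarrow> 'v" where
  "ch \<rho> e = (if D \<rho> (fst e) < D \<rho> (snd e) then snd e else fst e)"

lemma ch_props:
  assumes "(r, b) \<in> tree_edges red adj"
  shows "ch \<rho> (r, b) \<noteq> \<rho>" "(Asym \<rho> r b)^2 = G \<rho> (ch \<rho> (r, b))"
proof -
  have a: "adj r b" using assms unfolding tree_edges_def by auto
  from D_adj[OF a, of \<rho>] have "D \<rho> b = Suc (D \<rho> r) \<or> D \<rho> r = Suc (D \<rho> b)" .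
  then show "ch \<rho> (r, b) \<noteq> \<rho>" "(Asym \<rho> r b)^2 = G \<rho> (ch \<rho> (r, b))"
    unfolding ch_def Asym_def G_def using D_zero by auto
qed

lemma ch_inj: "inj_on (ch \<rho>) (tree_edges red adj)"
proof (rule inj_onI)
  fix e1 e2 assume e1: "e1 \<in> tree_edges red adj" and e2: "e2 \<in> tree_edges red adj" and eq: "ch \<rho> e1 = ch \<rho> e2"
  obtain r b where rb: "e1 = (r, b)" "red r" "adj r b" using e1 unfolding tree_edges_def by auto
  obtain r' b' where rb': "e2 = (r', b')" "red r'" "adj r' b'" using e2 unfolding tree_edges_def by auto
  have nb: "\<not> red b" "\<not> red b'" using bip rb rb' by blast+
  have o1: "D \<rho> b = Suc (D \<rho> r) \<or> D \<rho> r = Suc (D \<rho> b)" using D_adj[OF rb(3)] .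
  have o2: "D \<rho> b' = Suc (D \<rho> r') \<or> D \<rho> r' = Suc (D \<rho> b')" using D_adj[OF rb'(3)] .
  show "e1 = e2"
  proof (cases "D \<rho> b = Suc (D \<rho> r)")
    case c1: True
    then have v1: "ch \<rho> e1 = b" unfolding ch_def rb by simp
    show ?thesis
    proof (cases "D \<rho> b' = Suc (D \<rho> r')")
      case True
      then have "ch \<rho> e2 = b'" unfolding ch_def rb' by simp
      then have bb: "b = b'" using eq v1 by simp
      have "D \<rho> r' = D \<rho> r" using True c1 bb by simp
      then have "r = r'" using unique_parent[OF c1 sym[OF rb(3)], of r'] bb sym[OF rb'(3)] by simp
      then show ?thesis using rb rb' bb by simp
    next
      case False
      then have "ch \<rho> e2 = r'" unfolding ch_def rb' using o2 by auto
      then show ?thesis using eq v1 nb rb' by simp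
    qed
  next
    case c1: False
    then have d1: "D \<rho> r = Suc (D \<rho> b)" using o1 by simp
    then have v1: "ch \<rho> e1 = r" unfolding ch_def rb by simp
    show ?thesis
    proof (cases "D \<rho> b' = Suc (D \<rho> r')")
      case True
      then have "ch \<rho> e2 = b'" unfolding ch_def rb' by simp
      then show ?thesis using eq v1 nb rb by simp
    next
      case False
      then have d2: "D \<rho> r' = Suc (D \<rho> b')" using o2 by simp
      then have "ch \<rho> e2 = r'" unfolding ch_def rb' by simp
      then have rr: "r = r'" using eq v1 by simp
      have "D \<rho> b' = D \<rho> b" using d1 d2 rr by simp
      then have "b = b'" using unique_parent[OF d1 rb(3), of b'] rr rb'(3) by simp
      then show ?thesis using rb rb' rr by simp
    qed
  qed
qed

lemma Asym_sq_summable: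
  assumes "dR * dB > 1"
  shows "(\<lambda>(r, b). (Asym \<rho> r b)^2) summable_on tree_edges red adj"
proof -
  have "ch \<rho> ` tree_edges red adj \<subseteq> {v. v \<noteq> \<rho>}" using ch_props(1) by auto
  then have "G \<rho> summable_on ch \<rho> ` tree_edges red adj"
    by (rule summable_on_subset_banach[OF G_summable[OF assms]])
  then have "(G \<rho> \<circ> ch \<rho>) summable_on tree_edges red adj"
    by (simp only: summable_on_reindex[OF ch_inj])
  moreover have "(G \<rho> \<circ> ch \<rho>) summable_on tree_edges red adj \<longleftrightarrow> (\<lambda>(r, b). (Asym \<rho> r b)^2) summable_on tree_edges red adj"
    by (rule summable_on_cong) (use ch_props(2) in auto)
  ultimately show ?thesis by simp
qed

end


lemma L2_gen:
  fixes F :: "'v \<Rightarrow> 'v \<Rightarrow> real" and g :: "real \<Rightarrow> complex"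
  assumes g: "continuous_on UNIV g"
    and sq: "(\<lambda>(r, b). (F r b)^2) summable_on tree_edges red adj"
  shows "in_L2_tree red adj (\<lambda>r b x. of_real (F r b) * g x)"
proof -
  define I where "I = integral {0..1} (\<lambda>x. (cmod (g x))^2)"
  have cont: "continuous_on UNIV (\<lambda>x. of_real c * g x)" for c :: real
    by (intro continuous_intros g)
  have meas: "(\<lambda>x. of_real c * g x) \<in> borel_measurable lborel" for c :: real
    using borel_measurable_continuous_onI[OF cont] by simp
  have intg: "(\<lambda>x. (cmod (of_real c * g x))^2) integrable_on {0..1}" for c :: real
    by (rule integrable_continuous_interval)
       (intro continuous_intros continuous_on_subset[OF g], simp)
  have int_eq: "integral {0..1} (\<lambda>x. (cmod (of_real c * g x))^2) = c^2 * I" for c :: real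
  proof -
    have "(\<lambda>x. (cmod (of_real c * g x))^2) = (\<lambda>x. c^2 * (cmod (g x))^2)"
      by (auto simp: norm_mult power_mult_distrib)
    then show ?thesis unfolding I_def by simp
  qed
  have "(\<lambda>e. (\<lambda>(r, b). (F r b)^2) e * I) summable_on tree_edges red adj"
    by (rule summable_on_cmult_left[OF sq])
  moreover have "(\<lambda>e. (\<lambda>(r, b). (F r b)^2) e * I) summable_on tree_edges red adj \<longleftrightarrow>
      (\<lambda>(r, b). integral {0..1} (\<lambda>x. (cmod (of_real (F r b) * g x))^2)) summable_on tree_edges red adj"
    by (rule summable_on_cong) (auto simp: int_eq)
  ultimately show ?thesis
    unfolding in_L2_tree_def using meas intg by auto
qed

lemma sin_deriv_real:
  fixes w :: complex
  shows "((\<lambda>x. of_real c * sin (w * of_real x)) has_vector_derivative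
      (of_real c * (w * cos (w * of_real a)))) (at a within S)"
  by (rule has_vector_derivative_real_field) (auto intro!: derivative_eq_intros)

lemma cos_deriv_real:
  fixes w :: complex
  shows "((\<lambda>x. of_real c * (w * cos (w * of_real x))) has_vector_derivative
      (of_real c * (- (w^2) * sin (w * of_real a)))) (at a within S)"
proof (rule has_vector_derivative_real_field)
  show "((\<lambda>z. of_real c * (w * cos (w * z))) has_field_derivative
      (of_real c * (- (w^2) * sin (w * of_real a)))) (at (of_real a))"
    by (auto intro!: derivative_eq_intros simp: power2_eq_square)
qed

lemma eig_from_flow:
  fixes F :: "'v \<Rightarrow> 'v \<Rightarrow> real" and w lam :: complex
  assumes w: "w \<noteq> 0" "sin w = 0" "w^2 = lam"
    and sq: "(\<lambda>(r, b). (F r b)^2) summable_on tree_edges red adj"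
    and kr: "\<And>r. red r \<Longrightarrow> (\<Sum>b\<in>{b. adj r b}. F r b) = 0"
    and kb: "\<And>b. \<not> red b \<Longrightarrow> (\<Sum>r\<in>{r. adj b r}. F r b) = 0"
    and nz: "(r0, b1) \<in> tree_edges red adj" "F r0 b1 \<noteq> 0"
  shows "is_eigenvalue_L red adj lam"
proof -
  define f where "f = (\<lambda>r b x. of_real (F r b) * sin (w * of_real x))"
  define h where "h = (\<lambda>r b x. of_real (F r b) * (- lam * sin (w * of_real x)))"
  have L2f: "in_L2_tree red adj f" unfolding f_def
    by (rule L2_gen[OF _ sq]) (intro continuous_intros)
  have L2h: "in_L2_tree red adj h" unfolding h_def
    by (rule L2_gen[OF _ sq]) (intro continuous_intros)
  have der: "\<exists>f'. (\<forall>x\<in>{0..1}. (f r b has_vector_derivative f' x) (at x within {0..1})) \<and>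
        (\<forall>x\<in>{0..1}. (h r b has_integral (f' x - f' 0)) {0..x})" for r b
  proof (intro exI[of _ "\<lambda>x. of_real (F r b) * (w * cos (w * of_real x))"] conjI ballI)
    fix x :: real assume "x \<in> {0..1}"
    show "(f r b has_vector_derivative of_real (F r b) * (w * cos (w * of_real x))) (at x within {0..1})"
      unfolding f_def by (rule sin_deriv_real)
  next
    fix x :: real assume x: "x \<in> {0..1}"
    have "((\<lambda>x. of_real (F r b) * (- (w^2) * sin (w * of_real x))) has_integral
        ((\<lambda>x. of_real (F r b) * (w * cos (w * of_real x))) x - (\<lambda>x. of_real (F r b) * (w * cos (w * of_real x))) 0)) {0..x}"
      by (rule fundamental_theorem_of_calculus[OF _ cos_deriv_real]) (use x in simp)
    then show "(h r b has_integral
        (of_real (F r b) * (w * cos (w * of_real x)) - of_real (F r b) * (w * cos (w * of_real 0)))) {0..x}"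
      unfolding h_def using w(3) by simp
  qed
  have vd0: "vector_derivative (f r b) (at 0 within {0..1}) = of_real (F r b) * w" for r b
  proof -
    have "vector_derivative (f r b) (at 0 within {0..1}) = of_real (F r b) * (w * cos (w * of_real 0))"
      unfolding f_def by (rule vector_derivative_within_closed_interval[OF _ _ sin_deriv_real]) simp_all
    then show ?thesis by simp
  qed
  have vd1: "vector_derivative (f r b) (at 1 within {0..1}) = of_real (F r b) * (w * cos w)" for r b
  proof -
    have "vector_derivative (f r b) (at 1 within {0..1}) = of_real (F r b) * (w * cos (w * of_real 1))"
      unfolding f_def by (rule vector_derivative_within_closed_interval[OF _ _ sin_deriv_real]) simp_all
    then show ?thesis by simp
  qed
  have Kr: "(\<Sum>b\<in>{b. adj r b}. vector_derivative (f r b) (at 0 within {0..1})) = 0" if "red r" for r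
  proof -
    have "(\<Sum>b\<in>{b. adj r b}. vector_derivative (f r b) (at 0 within {0..1}))
        = (\<Sum>b\<in>{b. adj r b}. of_real (F r b)) * w"
      unfolding vd0 by (simp add: sum_distrib_right)
    also have "\<dots> = 0" using kr[OF that] by (simp flip: of_real_sum)
    finally show ?thesis .
  qed
  have Kb: "(\<Sum>r\<in>{r. adj b r}. - vector_derivative (f r b) (at 1 within {0..1})) = 0" if "\<not> red b" for b
  proof -
    have "(\<Sum>r\<in>{r. adj b r}. - vector_derivative (f r b) (at 1 within {0..1}))
        = - ((\<Sum>r\<in>{r. adj b r}. of_real (F r b)) * (w * cos w))"
      unfolding vd1 by (simp add: sum_distrib_right sum_negf)
    also have "\<dots> = 0" using kb[OF that] by (simp flip: of_real_sum)
    finally show ?thesis .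
  qed
  have f0: "f r b 0 = 0" for r b unfolding f_def by simp
  have f1: "f r b 1 = 0" for r b unfolding f_def using w(2) by simp
  have dom: "in_dom_L red adj f h"
    unfolding in_dom_L_def using L2f L2h der Kr Kb f0 f1 by auto
  have I: "integral {0..1} (\<lambda>x. (cmod (f r0 b1 x))^2) \<noteq> 0"
  proof
    assume i0: "integral {0..1} (\<lambda>x. (cmod (f r0 b1 x))^2) = 0"
    have cont: "continuous_on (cbox 0 1) (\<lambda>x. (cmod (f r0 b1 x))^2)"
      unfolding f_def by (intro continuous_intros)
    have "(\<lambda>x. (cmod (f r0 b1 x))^2) integrable_on cbox 0 1"
      by (rule integrable_continuous[OF cont])
    then have hi: "((\<lambda>x. (cmod (f r0 b1 x))^2) has_integral 0) (cbox 0 1)"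
      using i0 by (simp add: has_integral_integral)
    obtain x where x: "x \<in> {0..1}" "sin (w * of_real x) \<noteq> 0" using sin_point[OF w(1,2)] by blast
    have "(cmod (f r0 b1 x))^2 = 0"
      by (rule has_integral_0_cbox_imp_0[OF cont _ hi]) (use x in auto)
    then show False using x nz(2) unfolding f_def by simp
  qed
  have ev: "\<forall>(r, b)\<in>tree_edges red adj. AE x in lborel. x \<in> {0..1} \<longrightarrow> - h r b x = lam * f r b x"
    unfolding f_def h_def by (auto simp: algebra_simps)
  have ex: "\<exists>(r, b)\<in>tree_edges red adj. integral {0..1} (\<lambda>x. (cmod (f r b x))\<^sup>2) \<noteq> 0"
    using nz(1) I by blast
  show ?thesis
    unfolding is_eigenvalue_L_def using dom ev ex by blast
qed


context btree begin

lemma exists_edge: "\<exists>r0 b0 b1. red r0 \<and> adj r0 b0 \<and> adj r0 b1 \<and> b0 \<noteq> b1"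
proof -
  define v :: 'v where "v = undefined"
  have "card {u. adj v u} > 0" using nb_card[of v] by simp
  then obtain u where u: "adj v u" by (metis (mono_tags) card_gt_0_iff empty_Collect_eq)
  define r0 where "r0 = (if red v then v else u)"
  have r0: "red r0" unfolding r0_def using bip[OF u] by auto
  have c: "card {b. adj r0 b} \<ge> 2" using nb_card[of r0] dg_pos[of r0] by simp
  then obtain b0 where b0: "adj r0 b0" by (metis (mono_tags) card.empty empty_Collect_eq not_numeral_le_zero)
  have "card ({b. adj r0 b} - {b0}) \<ge> 1" using c b0 nb_fin[of r0] by simp
  then obtain b1 where "b1 \<in> {b. adj r0 b} - {b0}" by (metis (mono_tags) card.empty ex_in_conv not_one_le_zero)
  then show ?thesis using r0 b0 by blast
qed

lemma eig:
  fixes w lam :: complex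
  assumes dd: "dR * dB > 1" and w: "w \<noteq> 0" "sin w = 0" "w^2 = lam"
  shows "is_eigenvalue_L red adj lam"
proof -
  obtain r0 b0 b1 where e: "red r0" "adj r0 b0" "adj r0 b1" "b0 \<noteq> b1" using exists_edge by blast
  have b0b: "\<not> red b0" using bip[OF e(2)] e(1) by simp
  define c :: real where "c = (real dR + 1) / (real dB + 1)"
  define t :: real where "t = - (real dR + 1)"
  define ind where "ind = (\<lambda>r b. if r = r0 \<and> b = b0 then 1 else (0::real))"
  define Fv where "Fv = (\<lambda>r b. Asym r0 r b + c * Asym b0 r b + t * ind r b)"
  have A1e: "Asym r0 r0 b = 1" for b unfolding Asym_def by simp
  have ind_le: "\<bar>ind r b\<bar> \<le> \<bar>Asym r0 r b\<bar>" for r b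
    unfolding ind_def using A1e by auto
  have pw: "(Fv r b)^2 \<le> (2 * (1 + \<bar>t\<bar>)^2) * (Asym r0 r b)^2 + (2 * c^2) * (Asym b0 r b)^2" for r b
  proof -
    define X where "X = Asym r0 r b + t * ind r b"
    define Y where "Y = c * Asym b0 r b"
    have "\<bar>X\<bar> \<le> \<bar>Asym r0 r b\<bar> + \<bar>t\<bar> * \<bar>ind r b\<bar>" unfolding X_def by (metis abs_mult abs_triangle_ineq)
    also have "\<dots> \<le> \<bar>Asym r0 r b\<bar> + \<bar>t\<bar> * \<bar>Asym r0 r b\<bar>" using ind_le[of r b] by (simp add: mult_left_mono)
    finally have "\<bar>X\<bar> \<le> (1 + \<bar>t\<bar>) * \<bar>Asym r0 r b\<bar>" by (simp add: algebra_simps)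
    then have "\<bar>X\<bar>^2 \<le> ((1 + \<bar>t\<bar>) * \<bar>Asym r0 r b\<bar>)^2" by (rule power_mono) simp
    then have X2: "X^2 \<le> (1 + \<bar>t\<bar>)^2 * (Asym r0 r b)^2" by (simp add: power_mult_distrib)
    have "(X + Y)^2 \<le> 2 * X^2 + 2 * Y^2" using sum_squares_ge_zero[of "X - Y" 0]
      by (simp add: power2_eq_square algebra_simps)
    moreover have "Fv r b = X + Y" unfolding Fv_def X_def Y_def by simp
    ultimately show ?thesis using X2 unfolding Y_def by (simp add: power_mult_distrib)
  qed
  have sq: "(\<lambda>(r, b). (Fv r b)^2) summable_on tree_edges red adj"
  proof (rule summable_on_comparison_test)
    have s1: "(\<lambda>(r, b). (Asym r0 r b)^2) summable_on tree_edges red adj" by (rule Asym_sq_summable[OF dd])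
    have s2: "(\<lambda>(r, b). (Asym b0 r b)^2) summable_on tree_edges red adj" by (rule Asym_sq_summable[OF dd])
    show "(\<lambda>e. (2 * (1 + \<bar>t\<bar>)^2) * (\<lambda>(r, b). (Asym r0 r b)^2) e + (2 * c^2) * (\<lambda>(r, b). (Asym b0 r b)^2) e)
        summable_on tree_edges red adj"
      by (intro summable_on_add summable_on_cmult_right s1 s2)
    show "\<And>e. e \<in> tree_edges red adj \<Longrightarrow> (\<lambda>(r, b). (Fv r b)^2) e \<le>
        (2 * (1 + \<bar>t\<bar>)^2) * (\<lambda>(r, b). (Asym r0 r b)^2) e + (2 * c^2) * (\<lambda>(r, b). (Asym b0 r b)^2) e"
      using pw by auto
    show "\<And>e. e \<in> tree_edges red adj \<Longrightarrow> 0 \<le> (\<lambda>(r, b). (Fv r b)^2) e" by auto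
  qed
  have kr: "(\<Sum>b\<in>{b. adj r b}. Fv r b) = 0" if rr: "red r" for r
  proof -
    have rb0: "r \<noteq> b0" using rr b0b by auto
    have s2: "(\<Sum>b\<in>{b. adj r b}. Asym b0 r b) = 0"
      using kir_other[OF rb0] by (simp add: Asym_sym)
    have "(\<Sum>b\<in>{b. adj r b}. Fv r b) = (\<Sum>b\<in>{b. adj r b}. Asym r0 r b) + c * (\<Sum>b\<in>{b. adj r b}. Asym b0 r b)
        + t * (\<Sum>b\<in>{b. adj r b}. ind r b)"
      unfolding Fv_def by (simp add: sum.distrib sum_distrib_left)
    also have "\<dots> = 0"
    proof (cases "r = r0")
      case True
      have s1: "(\<Sum>b\<in>{b. adj r b}. Asym r0 r b) = real dR + 1"
        using kir_root[of r0] True e(1) unfolding dg_def by simp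
      have s3: "(\<Sum>b\<in>{b. adj r b}. ind r b) = 1"
        unfolding ind_def using True e(2) nb_fin[of r] by simp
      show ?thesis unfolding s1 s2 s3 t_def by simp
    next
      case False
      have s1: "(\<Sum>b\<in>{b. adj r b}. Asym r0 r b) = 0" using kir_other[OF False] .
      have s3: "(\<Sum>b\<in>{b. adj r b}. ind r b) = 0" unfolding ind_def using False by simp
      show ?thesis unfolding s1 s2 s3 by simp
    qed
    finally show ?thesis .
  qed
  have kb: "(\<Sum>r\<in>{r. adj b r}. Fv r b) = 0" if bb: "\<not> red b" for b
  proof -
    have br0: "b \<noteq> r0" using bb e(1) by auto
    have s1: "(\<Sum>r\<in>{r. adj b r}. Asym r0 r b) = 0"
      using kir_other[OF br0] by (simp add: Asym_sym)
    have "(\<Sum>r\<in>{r. adj b r}. Fv r b) = (\<Sum>r\<in>{r. adj b r}. Asym r0 r b) + c * (\<Sum>r\<in>{r. adj b r}. Asym b0 r b)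
        + t * (\<Sum>r\<in>{r. adj b r}. ind r b)"
      unfolding Fv_def by (simp add: sum.distrib sum_distrib_left)
    also have "\<dots> = 0"
    proof (cases "b = b0")
      case True
      have s2: "(\<Sum>r\<in>{r. adj b r}. Asym b0 r b) = real dB + 1"
        using kir_root[of b0] True b0b unfolding dg_def by (simp add: Asym_sym)
      have s3: "(\<Sum>r\<in>{r. adj b r}. ind r b) = 1"
        unfolding ind_def using True sym[OF e(2)] nb_fin[of b] by simp
      have "c * (real dB + 1) = real dR + 1" unfolding c_def by simp
      then show ?thesis unfolding s1 s2 s3 t_def by simp
    next
      case False
      have s2: "(\<Sum>r\<in>{r. adj b r}. Asym b0 r b) = 0" using kir_other[OF False] by (simp add: Asym_sym)
      have s3: "(\<Sum>r\<in>{r. adj b r}. ind r b) = 0" unfolding ind_def using False by simp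
      show ?thesis unfolding s1 s2 s3 by simp
    qed
    finally show ?thesis .
  qed
  have nz1: "(r0, b1) \<in> tree_edges red adj" unfolding tree_edges_def using e by simp
  have nz2: "Fv r0 b1 \<noteq> 0"
  proof -
    have d1: "D b0 r0 = 1" using D_adj[OF sym[OF e(2)], of b0] by simp
    have d2: "D b0 b1 = 2"
    proof -
      have "D b0 b1 = Suc (D b0 r0) \<or> D b0 r0 = Suc (D b0 b1)" using D_adj[OF e(3)] .
      moreover have "D b0 b1 \<noteq> 0" using D_zero e(4) by auto
      ultimately show ?thesis using d1 by auto
    qed
    have dc: "dcol b0 1 = dR" unfolding dcol_def using b0b by simp
    have A2: "Asym b0 r0 b1 = - 1 / real dR" unfolding Asym_def d1 d2
      using gam_Suc[of b0 0] dc by simp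
    have Fe: "Fv r0 b1 = 1 - c / real dR"
      unfolding Fv_def A1e A2 ind_def using e(4) by simp
    show ?thesis
    proof
      assume "Fv r0 b1 = 0"
      then have "c = real dR" unfolding Fe using dR1 by (simp add: field_simps)
      then have "real dR + 1 = real dR * (real dB + 1)" unfolding c_def by (simp add: field_simps)
      then have "real (dR * dB) = 1" by (simp add: algebra_simps)
      then have "dR * dB = 1" by (metis of_nat_1 of_nat_eq_iff)
      then show False using dd by simp
    qed
  qed
  show ?thesis by (rule eig_from_flow[OF w sq kr kb nz1 nz2])
qed

end

theorem lemma4p5:
  fixes \<delta>R \<delta>B :: nat and red :: "'v \<Rightarrow> bool" and adj :: "'v \<Rightarrow> 'v \<Rightarrow> bool"
  assumes "\<delta>R \<ge> 1" and "\<delta>B \<ge> 1"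
    and "biregular_tree \<delta>R \<delta>B red adj"
  shows "(sigma2 \<delta>R \<delta>B \<subseteq> \<real> - sigma1 \<delta>R \<delta>B \<and> discrete (sigma2 \<delta>R \<delta>B))
    \<and> (\<forall>lam. \<delta>R * \<delta>B > 1 \<and> ss lam = 0 \<longrightarrow> lam \<in> sigma2 \<delta>R \<delta>B)
    \<and> (\<forall>lam. lam \<in> sigma2 \<delta>R \<delta>B \<and> ss lam = 0 \<longrightarrow>
            (\<exists>x\<in>{0..1}. Uf \<delta>R \<delta>B lam x \<noteq> 0) \<and> (\<exists>x\<in>{0..1}. Vf \<delta>R \<delta>B lam x \<noteq> 0))
    \<and> (\<forall>lam. lam \<in> sigma2 \<delta>R \<delta>B \<and>
            (\<exists>x\<in>{0..1}. Uf \<delta>R \<delta>B lam x \<noteq> 0) \<and> (\<exists>x\<in>{0..1}. Vf \<delta>R \<delta>B lam x \<noteq> 0) \<longrightarrow>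
            is_eigenvalue_L red adj lam)"
proof -
  interpret btree \<delta>R \<delta>B red adj using assms by unfold_locales
  have p4: "is_eigenvalue_L red adj lam"
    if "lam \<in> sigma2 \<delta>R \<delta>B" "\<exists>x\<in>{0..1}. Uf \<delta>R \<delta>B lam x \<noteq> 0" "\<exists>x\<in>{0..1}. Vf \<delta>R \<delta>B lam x \<noteq> 0" for lam
  proof -
    note pp = part4_prep[OF assms(1,2) that]
    have w: "omg lam \<noteq> 0" "sin (omg lam) = 0" using ss0_omega[OF pp(1)] by auto
    show ?thesis by (rule eig[OF pp(2) w omg_sq])
  qed
  show ?thesis
    using part1[OF assms(1,2)] part2 part3[OF assms(1,2)] p4 by blast
qed


end
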